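(* Let $\bm w$ be a lazy Markov stick-breaking weights sequence with parameters $(\rho,\bm\pi)$, where $\pi_j=\mathrm{Beta}(1-\sigma,\theta+j\sigma)$ with $0\le\sigma<1$ and $\theta>-\sigma$. Then for every $j\ge1$, $$\mathbb P[w_{j+1}\le w_j]=\rho+(1-\rho)\,\mathbb E\big[\mathcal I_{c(v)}(1-\sigma,\theta+(j+1)\sigma)\big],$$ where $v\sim\mathrm{Beta}(1-\sigma,\theta+j\sigma)$, $c(v)=\min\{1,v/(1-v)\}$, and $\mathcal I_x(a,b)$ is the regularized incomplete Beta function.
   Context: $\mathcal I_x(a,b)$ is the $\mathrm{Beta}(a,b)$ distribution function at $x$. With $F_j$ the distribution function of $\pi_j$ and $\Upsilon_j=F_{j+1}^{-1}\circ F_j$, a lazy Markov stick-breaking weights sequence with parameters $(\rho,\bm\pi)$, $\rho\in[0,1]$, is $w_1=v_1$, $w_j=v_j\prod_{i<j}(1-v_i)$ where $\bm v$ is a Markov chain with $v_1\sim\pi_1$ and $\mathbb P[v_{j+1}\in\cdot\mid v_j]=\rho\,\delta_{\Upsilon_j(v_j)}+(1-\rho)\pi_{j+1}$. *)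

theory Defs
  imports "HOL-Probability.Probability"
begin

definition beta_density :: "real \<Rightarrow> real \<Rightarrow> real \<Rightarrow> real" where
  "beta_density a b x =
     (if 0 < x \<and> x < 1 then x powr (a - 1) * (1 - x) powr (b - 1) / Beta a b else 0)"

definition beta_measure :: "real \<Rightarrow> real \<Rightarrow> real measure" where
  "beta_measure a b = density lborel (\<lambda>x. ennreal (beta_density a b x))"

definition incbeta :: "real \<Rightarrow> real \<Rightarrow> real \<Rightarrow> real" where
  "incbeta a b x = measure (beta_measure a b) {..x}"

definition cdf_of :: "real measure \<Rightarrow> real \<Rightarrow> real" where
  "cdf_of \<mu> x = measure \<mu> {..x}"

definition quantile_of :: "real measure \<Rightarrow> real \<Rightarrow> real" where
  "quantile_of \<mu> p = Inf {x \<in> {0..1}. p \<le> cdf_of \<mu> x}"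

definition Upsilon :: "(nat \<Rightarrow> real measure) \<Rightarrow> nat \<Rightarrow> real \<Rightarrow> real" where
  "Upsilon \<pi> j x = quantile_of (\<pi> (Suc j)) (cdf_of (\<pi> j) x)"

definition lazy_kernel :: "real \<Rightarrow> (nat \<Rightarrow> real measure) \<Rightarrow> nat \<Rightarrow> real \<Rightarrow> real set \<Rightarrow> real" where
  "lazy_kernel \<rho> \<pi> j x A =
     \<rho> * indicator A (Upsilon \<pi> j x) + (1 - \<rho>) * measure (\<pi> (Suc j)) A"

text \<open>v_1, v_2, ... (indices from 1) is a Markov chain on the probability space M with
  v_1 ~ pi_1 and P[v_{j+1} \<in> A | v_1, ..., v_j] = lazy_kernel rho pi j (v_j) A.\<close>
definition lazy_markov_chain ::
  "'a measure \<Rightarrow> real \<Rightarrow> (nat \<Rightarrow> real measure) \<Rightarrow> (nat \<Rightarrow> 'a \<Rightarrow> real) \<Rightarrow> bool" where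
  "lazy_markov_chain M \<rho> \<pi> v \<longleftrightarrow>
     prob_space M \<and>
     (\<forall>j\<ge>1. v j \<in> borel_measurable M) \<and>
     distr M borel (v 1) = \<pi> 1 \<and>
     (\<forall>j\<ge>1. \<forall>A \<in> sets borel. \<forall>B \<in> sets (PiM {1..j} (\<lambda>_. (borel :: real measure))).
        measure M {\<omega> \<in> space M. (\<lambda>i\<in>{1..j}. v i \<omega>) \<in> B \<and> v (Suc j) \<omega> \<in> A} =
        (\<integral>\<omega>. indicator B (\<lambda>i\<in>{1..j}. v i \<omega>) * lazy_kernel \<rho> \<pi> j (v j \<omega>) A \<partial>M))"

definition sb_weight :: "(nat \<Rightarrow> 'a \<Rightarrow> real) \<Rightarrow> nat \<Rightarrow> 'a \<Rightarrow> real" where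
  "sb_weight v j \<omega> = v j \<omega> * (\<Prod>i\<in>{1..<j}. (1 - v i \<omega>))"

end

theory Submission
  imports Defs
begin

lemma Beta_pos: "a > 0 \<Longrightarrow> b > 0 \<Longrightarrow> Beta a b > (0::real)"
  by (simp add: Beta_def Gamma_real_pos)

lemma beta_density_nonneg: "a > 0 \<Longrightarrow> b > 0 \<Longrightarrow> beta_density a b x \<ge> 0"
  using Beta_pos[of a b] by (auto simp: beta_density_def)

lemma beta_density_meas[measurable]: "beta_density a b \<in> borel_measurable borel"
  unfolding beta_density_def by measurable

lemma sets_beta[simp, measurable_cong]: "sets (beta_measure a b) = sets borel"
  by (simp add: beta_measure_def)

lemma space_beta[simp]: "space (beta_measure a b) = UNIV"
  by (simp add: beta_measure_def)

lemma emeasure_beta: "A \<in> sets borel \<Longrightarrow>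
   emeasure (beta_measure a b) A = (\<integral>\<^sup>+x. ennreal (beta_density a b x) * indicator A x \<partial>lborel)"
  unfolding beta_measure_def by (subst emeasure_density) auto

lemma beta_real_distribution:
  assumes "a > 0" "b > 0"
  shows "real_distribution (beta_measure a b)"
proof -
  have B: "Beta a b > 0" using Beta_pos assms by auto
  have "(\<integral>\<^sup>+x. ennreal (beta_density a b x) \<partial>lborel) =
        (\<integral>\<^sup>+x. ennreal (x powr (a - 1) * (1 - x) powr (b - 1) / Beta a b) * indicator {0<..<1} x \<partial>lborel)"
    by (intro nn_integral_cong) (auto simp: beta_density_def split: split_indicator)
  also have "\<dots> = ennreal (Beta a b / Beta a b)"
  proof (rule nn_integral_has_integral_lebesgue')
    show "((\<lambda>x. x powr (a - 1) * (1 - x) powr (b - 1) / Beta a b) has_integral Beta a b / Beta a b) {0<..<1}"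
      using has_integral_Beta_real[OF assms] by (intro has_integral_divide) (simp add: has_integral_Icc_iff_Ioo)
  qed (use B in auto)
  also have "\<dots> = 1" using B by simp
  finally have "emeasure (beta_measure a b) UNIV = 1"
    by (simp add: emeasure_beta)
  then show ?thesis
    unfolding real_distribution_def real_distribution_axioms_def
    by (auto intro!: prob_spaceI)
qed

lemma emeasure_beta_outside:
  assumes "A \<in> sets borel" "A \<inter> {0<..<1} = {}"
  shows "emeasure (beta_measure a b) A = 0"
proof -
  have z: "\<And>x. ennreal (beta_density a b x) * indicator A x = 0"
    using assms(2) by (auto simp: beta_density_def split: split_indicator)
  have "(\<integral>\<^sup>+x. ennreal (beta_density a b x) * indicator A x \<partial>lborel) = (\<integral>\<^sup>+x. 0 \<partial>(lborel::real measure))"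
    by (rule nn_integral_cong, rule z)
  then show ?thesis using assms by (simp add: emeasure_beta)
qed

lemma emeasure_beta_singleton: "emeasure (beta_measure a b) {x} = 0"
proof -
  have "(\<integral>\<^sup>+y. ennreal (beta_density a b y) * indicator {x} y \<partial>lborel) = ennreal (beta_density a b x) * emeasure lborel {x}"
    by (rule nn_integral_indicator_singleton) auto
  then show ?thesis by (simp add: emeasure_beta)
qed

lemma cdf_of_eq: "cdf_of \<mu> = cdf \<mu>"
  by (simp add: cdf_of_def cdf_def fun_eq_iff)

context fixes a b :: real assumes ab: "a > 0" "b > 0"
begin

interpretation rd: real_distribution "beta_measure a b"
  using beta_real_distribution[OF ab] .

lemma cdf_beta_le0: "x \<le> 0 \<Longrightarrow> cdf_of (beta_measure a b) x = 0"
  unfolding cdf_of_def measure_def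
  by (subst emeasure_beta_outside) auto

lemma measure_beta_outside: "A \<in> sets borel \<Longrightarrow> A \<inter> {0<..<1} = {} \<Longrightarrow> measure (beta_measure a b) A = 0"
  unfolding measure_def by (subst emeasure_beta_outside) auto

lemma measure_beta_inside: "measure (beta_measure a b) {0<..<1} = 1"
proof -
  have "measure (beta_measure a b) (UNIV - {0<..<1}) = 0"
    by (rule measure_beta_outside) auto
  then show ?thesis using rd.prob_compl[of "{0<..<1}"] by simp
qed

lemma cdf_beta_ge1: "x \<ge> 1 \<Longrightarrow> cdf_of (beta_measure a b) x = 1"
proof -
  assume "x \<ge> 1"
  have "measure (beta_measure a b) (UNIV - {..x}) = 0"
    using \<open>x \<ge> 1\<close> by (intro measure_beta_outside) auto
  then show ?thesis using rd.prob_compl[of "{..x}"] by (simp add: cdf_of_def)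
qed

lemma cdf_beta_cont: "isCont (cdf_of (beta_measure a b)) x"
  unfolding cdf_of_eq rd.isCont_cdf measure_def by (simp add: emeasure_beta_singleton)

lemma cdf_beta_mono: "x \<le> y \<Longrightarrow> cdf_of (beta_measure a b) x \<le> cdf_of (beta_measure a b) y"
  unfolding cdf_of_eq by (rule rd.cdf_nondecreasing)

lemma cdf_beta_bounds: "0 \<le> cdf_of (beta_measure a b) x" "cdf_of (beta_measure a b) x \<le> 1"
  unfolding cdf_of_eq by (rule rd.cdf_nonneg, rule rd.cdf_bounded_prob)

end

lemma cdf_beta_order:
  assumes a: "a > 0" and b: "0 < b" "b \<le> b'"
  shows "cdf_of (beta_measure a b) x \<le> cdf_of (beta_measure a b') x"
proof -
  have b': "b' > 0" using b by auto
  interpret r1: real_distribution "beta_measure a b" using beta_real_distribution a b by auto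
  interpret r2: real_distribution "beta_measure a b'" using beta_real_distribution a b' by auto
  consider "x \<le> 0" | "x \<ge> 1" | "0 < x" "x < 1" by linarith
  then show ?thesis
  proof cases
    case 1 then show ?thesis using cdf_beta_le0 a b b' by simp
  next
    case 2 then show ?thesis using cdf_beta_ge1 a b b' by simp
  next
    case 3
    define B1 where "B1 = Beta a b"
    define B2 where "B2 = Beta a b'"
    have B1: "B1 > 0" and B2: "B2 > 0" using Beta_pos a b b' by (auto simp: B1_def B2_def)
    define r where "r t = B1 / B2 * (1 - t) powr (b' - b)" for t
    let ?f = "beta_density a b" and ?g = "beta_density a b'"
    have fg: "?g t = r t * ?f t" if "0 < t" "t < 1" for t
    proof -
      have "(1 - t) powr (b' - b) * (1 - t) powr (b - 1) = (1 - t) powr (b' - 1)"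
        using that by (simp add: powr_add[symmetric])
      then show ?thesis using that B1 B2
        by (simp add: beta_density_def r_def B1_def[symmetric] B2_def[symmetric] field_simps)
    qed
    have rpos: "r x \<ge> 0" using B1 B2 by (simp add: r_def)
    have r_anti: "r t \<ge> r x" if "0 < t" "t \<le> x" for t
      unfolding r_def using that 3 B1 B2 b
      by (intro mult_left_mono powr_mono2) auto
    have r_anti2: "r t \<le> r x" if "x \<le> t" "t < 1" for t
      unfolding r_def using that 3 B1 B2 b
      by (intro mult_left_mono powr_mono2) auto
    have low: "ennreal (r x) * (ennreal (?f t) * indicator {..x} t) \<le> ennreal (?g t) * indicator {..x} t" for t
    proof (cases "0 < t \<and> t < 1 \<and> t \<le> x")
      case True
      then have "r x * ?f t \<le> ?g t" using fg[of t] r_anti[of t] beta_density_nonneg[OF a b(1), of t]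
        by (simp add: mult_right_mono)
      then show ?thesis using True rpos beta_density_nonneg[OF a b(1), of t]
        by (simp add: ennreal_mult[symmetric] ennreal_leI)
    next
      case False
      then have "ennreal (?f t) * (indicator {..x} t :: ennreal) = 0" using 3
        by (auto simp: beta_density_def split: split_indicator)
      then show ?thesis by (metis mult_zero_right zero_le)
    qed
    have high: "ennreal (?g t) * indicator {x<..} t \<le> ennreal (r x) * (ennreal (?f t) * indicator {x<..} t)" for t
    proof (cases "0 < t \<and> t < 1 \<and> x < t")
      case True
      then have "?g t \<le> r x * ?f t" using fg[of t] r_anti2[of t] beta_density_nonneg[OF a b(1), of t]
        by (simp add: mult_right_mono)
      then show ?thesis using True rpos beta_density_nonneg[OF a b(1), of t]
        by (simp add: ennreal_mult[symmetric] ennreal_leI)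
    next
      case False
      then have "ennreal (?g t) * (indicator {x<..} t :: ennreal) = 0" using 3
        by (auto simp: beta_density_def split: split_indicator)
      then show ?thesis by (metis mult_zero_right zero_le)
    qed
    have "ennreal (r x) * emeasure (beta_measure a b) {..x} \<le> emeasure (beta_measure a b') {..x}"
      unfolding emeasure_beta[OF atMost_borel]
      by (subst nn_integral_cmult[symmetric]) (auto intro!: nn_integral_mono low)
    then have L: "r x * cdf_of (beta_measure a b) x \<le> cdf_of (beta_measure a b') x"
      unfolding cdf_of_def r1.emeasure_eq_measure r2.emeasure_eq_measure
      using rpos by (simp add: ennreal_mult[symmetric])
    have "emeasure (beta_measure a b') {x<..} \<le> ennreal (r x) * emeasure (beta_measure a b) {x<..}"
      unfolding emeasure_beta[OF greaterThan_borel]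
      by (subst nn_integral_cmult[symmetric]) (auto intro!: nn_integral_mono high)
    then have H: "measure (beta_measure a b') {x<..} \<le> r x * measure (beta_measure a b) {x<..}"
      unfolding r1.emeasure_eq_measure r2.emeasure_eq_measure
      using rpos by (simp add: ennreal_mult[symmetric])
    have c1: "measure (beta_measure a b) {x<..} = 1 - cdf_of (beta_measure a b) x"
      using r1.prob_compl[of "{..x}"] by (simp add: cdf_of_def Compl_eq_Diff_UNIV[symmetric])
    have c2: "measure (beta_measure a b') {x<..} = 1 - cdf_of (beta_measure a b') x"
      using r2.prob_compl[of "{..x}"] by (simp add: cdf_of_def Compl_eq_Diff_UNIV[symmetric])
    have F0: "cdf_of (beta_measure a b) x \<ge> 0" "cdf_of (beta_measure a b) x \<le> 1"
      using cdf_beta_bounds[OF a b(1)] by auto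
    show ?thesis
    proof (cases "r x \<ge> 1")
      case True
      then have "cdf_of (beta_measure a b) x \<le> r x * cdf_of (beta_measure a b) x"
        using F0 by (simp add: mult_le_cancel_right1)
      then show ?thesis using L by linarith
    next
      case False
      then have "r x * (1 - cdf_of (beta_measure a b) x) \<le> 1 - cdf_of (beta_measure a b) x"
        using F0 rpos False by (intro mult_left_le_one_le) auto
      then show ?thesis using H unfolding c1 c2 by linarith
    qed
  qed
qed

lemma quantile_facts:
  fixes G :: "real \<Rightarrow> real"
  assumes cont: "\<And>y. isCont G y" and mono: "\<And>x y. x \<le> y \<Longrightarrow> G x \<le> G y"
    and G1: "G 1 = 1" and p: "p \<le> 1"
  defines "S \<equiv> {y \<in> {0..1}. p \<le> G y}"
  shows "0 \<le> Inf S" "Inf S \<le> 1" "p \<le> G (Inf S)"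
    and "\<And>y. 0 \<le> y \<Longrightarrow> y \<le> 1 \<Longrightarrow> Inf S \<le> y \<longleftrightarrow> p \<le> G y"
proof -
  have ne: "S \<noteq> {}" and one: "1 \<in> S" using G1 p by (auto simp: S_def)
  have bdd: "bdd_below S" by (auto simp: S_def bdd_below_def)
  have "closed ({0..1} \<inter> {y. p \<le> G y})"
    by (intro closed_Int closed_atLeastAtMost closed_Collect_le continuous_intros)
       (auto intro: continuous_at_imp_continuous_on cont)
  moreover have "S = {0..1} \<inter> {y. p \<le> G y}" by (auto simp: S_def)
  ultimately have cl: "closed S" by simp
  have IS: "Inf S \<in> S" by (rule closed_contains_Inf[OF ne bdd cl])
  then show "0 \<le> Inf S" "Inf S \<le> 1" "p \<le> G (Inf S)" by (auto simp: S_def)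
  fix y :: real assume y: "0 \<le> y" "y \<le> 1"
  show "Inf S \<le> y \<longleftrightarrow> p \<le> G y"
  proof
    assume "Inf S \<le> y" then show "p \<le> G y" using IS mono[of "Inf S" y] by (auto simp: S_def)
  next
    assume "p \<le> G y" then have "y \<in> S" using y by (auto simp: S_def)
    then show "Inf S \<le> y" using bdd by (rule cInf_lower)
  qed
qed

lemma uniform_transform:
  assumes rd: "real_distribution \<mu>"
    and cont: "\<And>y. isCont (cdf_of \<mu>) y"
    and F0: "\<And>x. x \<le> 0 \<Longrightarrow> cdf_of \<mu> x = 0" and F1: "\<And>x. x \<ge> 1 \<Longrightarrow> cdf_of \<mu> x = 1"
    and p: "0 \<le> p" "p \<le> 1"
  shows "measure \<mu> {x. cdf_of \<mu> x \<le> p} = p"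
proof -
  interpret real_distribution \<mu> by fact
  let ?F = "cdf_of \<mu>"
  have mono: "x \<le> y \<Longrightarrow> ?F x \<le> ?F y" for x y unfolding cdf_of_eq by (rule cdf_nondecreasing)
  have bnd: "?F x \<le> 1" for x unfolding cdf_of_eq by (rule cdf_bounded_prob)
  show ?thesis
  proof (cases "p = 1")
    case True
    then show ?thesis using bnd prob_space by simp
  next
    case False
    define T where "T = {x. ?F x \<le> p}"
    have "\<exists>z. 0 \<le> z \<and> z \<le> 1 \<and> ?F z = p"
      using p F0[of 0] F1[of 1]
      by (intro IVT') (auto intro: continuous_at_imp_continuous_on cont)
    then obtain z where z: "?F z = p" by auto
    have zT: "z \<in> T" using z by (simp add: T_def)
    have bddT: "bdd_above T"
      unfolding bdd_above_def T_def using False F1[of 1] p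
      by (intro exI[of _ 1]) (smt (verit) F1 mem_Collect_eq)
    have clT: "closed T" unfolding T_def
      by (intro closed_Collect_le continuous_intros) (auto intro: continuous_at_imp_continuous_on cont)
    have sT: "Sup T \<in> T" using closed_contains_Sup[OF _ bddT clT] zT by auto
    have "T = {..Sup T}"
    proof
      show "T \<subseteq> {..Sup T}" using bddT by (auto intro: cSup_upper)
      show "{..Sup T} \<subseteq> T" using sT mono by (fastforce simp: T_def)
    qed
    then have "measure \<mu> T = ?F (Sup T)" by (simp add: cdf_of_def)
    moreover have "?F (Sup T) \<le> p" using sT by (simp add: T_def)
    moreover have "?F (Sup T) \<ge> p" using mono[OF cSup_upper[OF zT bddT]] z by simp
    ultimately show ?thesis by (simp add: T_def)
  qed
qed

lemma quantile_pushforward: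
  assumes rdm: "real_distribution \<mu>" and rdn: "real_distribution \<nu>"
    and contF: "\<And>y. isCont (cdf_of \<mu>) y"
    and F0: "\<And>x. x \<le> 0 \<Longrightarrow> cdf_of \<mu> x = 0" and F1: "\<And>x. x \<ge> 1 \<Longrightarrow> cdf_of \<mu> x = 1"
    and contG: "\<And>y. isCont (cdf_of \<nu>) y"
    and G0: "\<And>x. x \<le> 0 \<Longrightarrow> cdf_of \<nu> x = 0" and G1: "\<And>x. x \<ge> 1 \<Longrightarrow> cdf_of \<nu> x = 1"
  defines "U \<equiv> (\<lambda>x. quantile_of \<nu> (cdf_of \<mu> x))"
  shows "U \<in> borel_measurable borel" "\<And>x. 0 \<le> U x" "\<And>x. U x \<le> 1"
    and "distr \<mu> borel U = \<nu>"
proof -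
  interpret m: real_distribution \<mu> by fact
  interpret n: real_distribution \<nu> by fact
  let ?F = "cdf_of \<mu>" and ?G = "cdf_of \<nu>"
  have monoF: "x \<le> y \<Longrightarrow> ?F x \<le> ?F y" for x y unfolding cdf_of_eq by (rule m.cdf_nondecreasing)
  have monoG: "x \<le> y \<Longrightarrow> ?G x \<le> ?G y" for x y unfolding cdf_of_eq by (rule n.cdf_nondecreasing)
  have bF: "?F x \<le> 1" "0 \<le> ?F x" for x unfolding cdf_of_eq by (rule m.cdf_bounded_prob, rule m.cdf_nonneg)
  note Q = quantile_facts[OF contG monoG G1[of 1, simplified] bF(1)]
  show U0: "0 \<le> U x" and U1: "U x \<le> 1" for x using Q(1,2)[of x] by (auto simp: U_def quantile_of_def)
  have Uiff: "U x \<le> y \<longleftrightarrow> ?F x \<le> ?G y" if "0 \<le> y" "y \<le> 1" for x y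
    using Q(4)[of y x] that by (simp add: U_def quantile_of_def)
  have monoU: "mono U"
  proof (rule monoI)
    fix x y :: real assume "x \<le> y"
    have "U x \<le> U y" using Uiff[of "U y" x] Uiff[of "U y" y] U0[of y] U1[of y] monoF[OF \<open>x \<le> y\<close>] by auto
    then show "U x \<le> U y" .
  qed
  show Um: "U \<in> borel_measurable borel" by (rule borel_measurable_mono[OF monoU])
  have rdd: "real_distribution (distr \<mu> borel U)"
    using Um by (intro m.real_distribution_distr) simp
  show "distr \<mu> borel U = \<nu>"
  proof (rule cdf_unique[OF rdd rdn], rule ext)
    fix y
    have "cdf (distr \<mu> borel U) y = measure \<mu> {x. U x \<le> y}"
      unfolding cdf_def using Um by (subst measure_distr) (auto simp: vimage_def)
    also have "\<dots> = cdf \<nu> y"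
    proof -
      consider "y < 0" | "y \<ge> 1" | "0 \<le> y" "y < 1" by linarith
      then show ?thesis
      proof cases
        case 1
        then have "{x. U x \<le> y} = {}" using U0 by (auto simp: not_le intro: less_le_trans)
        then show ?thesis using G0[of y] 1 by (simp add: cdf_of_eq)
      next
        case 2
        then have "{x. U x \<le> y} = UNIV" using U1 by (auto intro: order_trans)
        then show ?thesis using G1[of y] 2 using m.prob_space m.space_eq_univ by (simp add: cdf_of_eq)
      next
        case 3
        then have "{x. U x \<le> y} = {x. ?F x \<le> ?G y}" using Uiff by auto
        moreover have "0 \<le> ?G y" "?G y \<le> 1" unfolding cdf_of_eq by (rule n.cdf_nonneg, rule n.cdf_bounded_prob)
        ultimately show ?thesis using uniform_transform[OF rdm contF F0 F1, of "?G y"]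
          by (simp add: cdf_of_eq)
      qed
    qed
    finally show "cdf (distr \<mu> borel U) y = cdf \<nu> y" .
  qed
qed

locale chain_setup =
  fixes M :: "'a measure" and v :: "nat \<Rightarrow> 'a \<Rightarrow> real" and \<rho> \<sigma> \<theta> :: real
  assumes r0: "0 \<le> \<rho>" and r1: "\<rho> \<le> 1"
    and s0: "0 \<le> \<sigma>" and s1: "\<sigma> < 1" and th: "\<theta> > - \<sigma>"
    and chain: "lazy_markov_chain M \<rho> (\<lambda>k. beta_measure (1 - \<sigma>) (\<theta> + real k * \<sigma>)) v"
begin

abbreviation "\<pi> \<equiv> (\<lambda>k. beta_measure (1 - \<sigma>) (\<theta> + real k * \<sigma>))"
abbreviation "Y \<equiv> Upsilon \<pi>"

lemma a_pos: "1 - \<sigma> > 0" using s1 by simp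

lemma b_pos: "k \<ge> 1 \<Longrightarrow> \<theta> + real k * \<sigma> > 0"
proof -
  assume "k \<ge> 1"
  then have "real k * \<sigma> \<ge> 1 * \<sigma>" using s0 by (intro mult_right_mono) auto
  then show ?thesis using th by simp
qed

lemma rd: "k \<ge> 1 \<Longrightarrow> real_distribution (\<pi> k)"
  by (rule beta_real_distribution[OF a_pos b_pos])

lemma ps: "prob_space M" using chain by (simp add: lazy_markov_chain_def)

lemma vmeas: "k \<ge> 1 \<Longrightarrow> v k \<in> borel_measurable M" using chain by (simp add: lazy_markov_chain_def)

lemma Y_facts:
  assumes k: "k \<ge> 1"
  shows "Y k \<in> borel_measurable borel" "\<And>x. 0 \<le> Y k x" "\<And>x. Y k x \<le> 1"
    and "distr (\<pi> k) borel (Y k) = \<pi> (Suc k)"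
proof -
  have k1: "Suc k \<ge> 1" by simp
  note qp = quantile_pushforward[OF rd[OF k] rd[OF k1],
     OF cdf_beta_cont[OF a_pos b_pos[OF k]] cdf_beta_le0[OF a_pos b_pos[OF k]] cdf_beta_ge1[OF a_pos b_pos[OF k]]
        cdf_beta_cont[OF a_pos b_pos[OF k1]] cdf_beta_le0[OF a_pos b_pos[OF k1]] cdf_beta_ge1[OF a_pos b_pos[OF k1]]]
  show "Y k \<in> borel_measurable borel" "\<And>x. 0 \<le> Y k x" "\<And>x. Y k x \<le> 1"
    "distr (\<pi> k) borel (Y k) = \<pi> (Suc k)"
    using qp unfolding Upsilon_def[abs_def] by auto
qed

lemma Y_le:
  assumes k: "k \<ge> 1" and x: "0 \<le> x" "x \<le> 1"
  shows "Y k x \<le> x"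
proof -
  have bk: "\<theta> + real k * \<sigma> > 0" using b_pos[OF k] .
  have ord: "cdf_of (\<pi> k) x \<le> cdf_of (\<pi> (Suc k)) x"
    using s0 by (intro cdf_beta_order[OF a_pos bk]) (auto simp: algebra_simps)
  note Q = quantile_facts[of "cdf_of (\<pi> (Suc k))" "cdf_of (\<pi> k) x",
    OF cdf_beta_cont[OF a_pos b_pos] cdf_beta_mono[OF a_pos b_pos] cdf_beta_ge1[OF a_pos b_pos]
       cdf_beta_bounds(2)[OF a_pos bk]]
  show ?thesis using Q(4)[of x] x ord by (simp add: Upsilon_def quantile_of_def)
qed

lemma chain_prop:
  assumes "k \<ge> 1" "A \<in> sets borel" "B \<in> sets (PiM {1..k} (\<lambda>_. (borel :: real measure)))"
  shows "measure M {\<omega> \<in> space M. (\<lambda>i\<in>{1..k}. v i \<omega>) \<in> B \<and> v (Suc k) \<omega> \<in> A} =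
        (\<integral>\<omega>. indicator B (\<lambda>i\<in>{1..k}. v i \<omega>) * lazy_kernel \<rho> \<pi> k (v k \<omega>) A \<partial>M)"
  using chain assms unfolding lazy_markov_chain_def by blast

lemma rect:
  assumes k: "k \<ge> 1" and A: "A \<in> sets borel" and B: "B \<in> sets borel"
  shows "measure M {\<omega> \<in> space M. v k \<omega> \<in> A \<and> v (Suc k) \<omega> \<in> B} =
     \<rho> * measure M {\<omega> \<in> space M. v k \<omega> \<in> A \<inter> Y k -` B} +
     (1 - \<rho>) * measure (\<pi> (Suc k)) B * measure M {\<omega> \<in> space M. v k \<omega> \<in> A}"
proof -
  interpret prob_space M by (rule ps)
  note [measurable] = vmeas[OF k] Y_facts(1)[OF k]
  define B' where "B' = (\<lambda>x. x k) -` A \<inter> space (PiM {1..k} (\<lambda>_. (borel :: real measure)))"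
  have kin: "k \<in> {1..k}" using k by simp
  have B': "B' \<in> sets (PiM {1..k} (\<lambda>_. (borel :: real measure)))"
    unfolding B'_def using measurable_sets[OF measurable_component_singleton[OF kin] A] by simp
  have mem: "(\<lambda>i\<in>{1..k}. v i \<omega>) \<in> B' \<longleftrightarrow> v k \<omega> \<in> A" for \<omega>
    using k by (auto simp: B'_def space_PiM)
  have "measure M {\<omega> \<in> space M. v k \<omega> \<in> A \<and> v (Suc k) \<omega> \<in> B} =
     (\<integral>\<omega>. indicator B' (\<lambda>i\<in>{1..k}. v i \<omega>) * lazy_kernel \<rho> \<pi> k (v k \<omega>) B \<partial>M)"
  proof -
    have "{\<omega> \<in> space M. (\<lambda>i\<in>{1..k}. v i \<omega>) \<in> B' \<and> v (Suc k) \<omega> \<in> B} =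
          {\<omega> \<in> space M. v k \<omega> \<in> A \<and> v (Suc k) \<omega> \<in> B}" using mem by blast
    then show ?thesis using chain_prop[OF k B B'] by simp
  qed
  also have "\<dots> = (\<integral>\<omega>. \<rho> * indicator {\<omega> \<in> space M. v k \<omega> \<in> A \<inter> Y k -` B} \<omega> +
        (1 - \<rho>) * measure (\<pi> (Suc k)) B * indicator {\<omega> \<in> space M. v k \<omega> \<in> A} \<omega> \<partial>M)"
    apply (rule Bochner_Integration.integral_cong[OF refl])
    apply (unfold indicator_def mem lazy_kernel_def)
    by auto
  also have "\<dots> = \<rho> * measure M {\<omega> \<in> space M. v k \<omega> \<in> A \<inter> Y k -` B} +
     (1 - \<rho>) * measure (\<pi> (Suc k)) B * measure M {\<omega> \<in> space M. v k \<omega> \<in> A}"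
  proof -
    have s1: "{\<omega> \<in> space M. v k \<omega> \<in> A \<inter> Y k -` B} \<in> sets M" using A B by measurable
    have s2: "{\<omega> \<in> space M. v k \<omega> \<in> A} \<in> sets M" using A by measurable
    have i1: "integrable M (indicator {\<omega> \<in> space M. v k \<omega> \<in> A \<inter> Y k -` B} :: 'a \<Rightarrow> real)"
      using s1 by (intro integrable_real_indicator) (auto simp: less_top[symmetric])
    have i2: "integrable M (indicator {\<omega> \<in> space M. v k \<omega> \<in> A} :: 'a \<Rightarrow> real)"
      using s2 by (intro integrable_real_indicator) (auto simp: less_top[symmetric])
    have e1: "{\<omega> \<in> space M. v k \<omega> \<in> A \<inter> Y k -` B} \<inter> space M = {\<omega> \<in> space M. v k \<omega> \<in> A \<inter> Y k -` B}" by auto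
    have e2: "{\<omega> \<in> space M. v k \<omega> \<in> A} \<inter> space M = {\<omega> \<in> space M. v k \<omega> \<in> A}" by auto
    show ?thesis
      using i1 i2 by (simp add: integral_add integral_indicator e1 e2 del: Int_iff)
  qed
  finally show ?thesis .
qed

lemma law: "k \<ge> 1 \<Longrightarrow> distr M borel (v k) = \<pi> k"
proof (induction k rule: dec_induct[where i=1, case_names base step])
  case base
  then show ?case using chain by (simp add: lazy_markov_chain_def)
next
  case (step k)
  interpret prob_space M by (rule ps)
  have k: "k \<ge> 1" by fact
  note [measurable] = vmeas[OF k] vmeas[of "Suc k"] Y_facts(1)[OF k]
  interpret rk: real_distribution "\<pi> k" by (rule rd[OF k])
  interpret rk1: real_distribution "\<pi> (Suc k)" by (rule rd) simp
  have lawk: "measure M {\<omega> \<in> space M. v k \<omega> \<in> E} = measure (\<pi> k) E" if "E \<in> sets borel" for E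
  proof -
    have "measure (\<pi> k) E = measure M (v k -` E \<inter> space M)"
      using measure_distr[OF vmeas[OF k], of E] that step.IH by simp
    moreover have "v k -` E \<inter> space M = {\<omega> \<in> space M. v k \<omega> \<in> E}" by auto
    ultimately show ?thesis by simp
  qed
  show ?case
  proof (rule measure_eqI)
    fix A assume A: "A \<in> sets (distr M borel (v (Suc k)))"
    then have A': "A \<in> sets borel" by simp
    have "measure (distr M borel (v (Suc k))) A = measure M {\<omega> \<in> space M. v k \<omega> \<in> UNIV \<and> v (Suc k) \<omega> \<in> A}"
      using A' by (simp add: measure_distr vimage_def Int_def conj_commute)
    also have "\<dots> = \<rho> * measure (\<pi> k) (Y k -` A) + (1 - \<rho>) * measure (\<pi> (Suc k)) A"
      using rect[of k UNIV A, OF k _ A'] lawk[of UNIV] lawk[of "Y k -` A"] A' rk.prob_space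
      by (simp add: measurable_sets_borel[OF Y_facts(1)[OF k] A'])
    also have "measure (\<pi> k) (Y k -` A) = measure (\<pi> (Suc k)) A"
    proof -
      have "measure (distr (\<pi> k) borel (Y k)) A = measure (\<pi> k) (Y k -` A \<inter> space (\<pi> k))"
        by (rule measure_distr[OF rk.measurable_finite_borel[OF Y_facts(1)[OF k]] A'])
      then show ?thesis using Y_facts(4)[OF k] by simp
    qed
    finally have "measure (distr M borel (v (Suc k))) A = measure (\<pi> (Suc k)) A"
      by (simp add: algebra_simps)
    then show "emeasure (distr M borel (v (Suc k))) A = emeasure (\<pi> (Suc k)) A"
    proof -
      interpret pd: prob_space "distr M borel (v (Suc k))" by (rule prob_space_distr) simp
      show ?thesis using A' \<open>measure (distr M borel (v (Suc k))) A = measure (\<pi> (Suc k)) A\<close>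
          rk1.emeasure_eq_measure[of A] by (simp add: pd.emeasure_eq_measure)
    qed
  qed simp
qed

end

context chain_setup
begin

lemma lawm: "k \<ge> 1 \<Longrightarrow> E \<in> sets borel \<Longrightarrow> measure M {\<omega> \<in> space M. v k \<omega> \<in> E} = measure (\<pi> k) E"
proof -
  assume k: "k \<ge> 1" and E: "E \<in> sets borel"
  have "measure (\<pi> k) E = measure M (v k -` E \<inter> space M)"
    using measure_distr[OF vmeas[OF k], of E] E law[OF k] by simp
  moreover have "v k -` E \<inter> space M = {\<omega> \<in> space M. v k \<omega> \<in> E}" by auto
  ultimately show ?thesis by simp
qed

lemma joint:
  assumes j: "j \<ge> 1" and C: "C \<in> sets (borel \<Otimes>\<^sub>M (borel :: real measure))"
  shows "measure M {\<omega> \<in> space M. (v j \<omega>, v (Suc j) \<omega>) \<in> C} =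
     \<rho> * measure (\<pi> j) {x. (x, Y j x) \<in> C} + (1 - \<rho>) * measure (\<pi> j \<Otimes>\<^sub>M \<pi> (Suc j)) C"
proof -
  interpret prob_space M by (rule ps)
  have j1: "Suc j \<ge> 1" by simp
  interpret rj: real_distribution "\<pi> j" by (rule rd[OF j])
  interpret rj1: real_distribution "\<pi> (Suc j)" by (rule rd[OF j1])
  interpret pp: pair_prob_space "\<pi> j" "\<pi> (Suc j)" by unfold_locales
  note [measurable] = vmeas[OF j] vmeas[OF j1] Y_facts(1)[OF j]
  let ?G = "{a \<times> b | a b. a \<in> sets (borel :: real measure) \<and> b \<in> sets (borel :: real measure)}"
  have sets_eq: "sets (borel \<Otimes>\<^sub>M (borel :: real measure)) = sigma_sets UNIV ?G"
    by (simp add: sets_pair_measure)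
  have Csig: "C \<in> sigma_sets UNIV ?G" using C sets_eq by simp
  define L where "L X = measure M {\<omega> \<in> space M. (v j \<omega>, v (Suc j) \<omega>) \<in> X}" for X
  define Pa where "Pa X = measure (\<pi> j) {x. (x, Y j x) \<in> X}" for X
  define Pb where "Pb X = measure (\<pi> j \<Otimes>\<^sub>M \<pi> (Suc j)) X" for X
  have mL: "{\<omega> \<in> space M. (v j \<omega>, v (Suc j) \<omega>) \<in> X} \<in> sets M" if "X \<in> sigma_sets UNIV ?G" for X
  proof -
    have X: "X \<in> sets (borel \<Otimes>\<^sub>M borel)" using that sets_eq by simp
    have "(\<lambda>\<omega>. (v j \<omega>, v (Suc j) \<omega>)) \<in> measurable M (borel \<Otimes>\<^sub>M borel)" by measurable
    from measurable_sets[OF this X] show ?thesis by (simp add: vimage_def Int_def conj_commute)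
  qed
  have mPa: "{x. (x, Y j x) \<in> X} \<in> sets (\<pi> j)" if "X \<in> sigma_sets UNIV ?G" for X
  proof -
    have X: "X \<in> sets (borel \<Otimes>\<^sub>M borel)" using that sets_eq by simp
    have "(\<lambda>x. (x, Y j x)) \<in> measurable borel (borel \<Otimes>\<^sub>M borel)" by measurable
    from measurable_sets[OF this X] show ?thesis by (simp add: vimage_def)
  qed
  have mPb: "X \<in> sets (\<pi> j \<Otimes>\<^sub>M \<pi> (Suc j))" if "X \<in> sigma_sets UNIV ?G" for X
    using that sets_eq by simp
  have st: "Int_stable ?G" by (rule Int_stable_pair_measure_generator)
  have cl: "?G \<subseteq> Pow UNIV" by simp
  from st cl Csig have "L C = \<rho> * Pa C + (1 - \<rho>) * Pb C"
  proof (induction C rule: sigma_sets_induct_disjoint)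
    case (basic X)
    then obtain A B where X: "X = A \<times> B" and A: "A \<in> sets borel" and B: "B \<in> sets borel" by auto
    have "L X = measure M {\<omega> \<in> space M. v j \<omega> \<in> A \<and> v (Suc j) \<omega> \<in> B}"
      by (simp add: L_def X)
    also have "\<dots> = \<rho> * measure (\<pi> j) (A \<inter> Y j -` B) + (1 - \<rho>) * (measure (\<pi> (Suc j)) B * measure (\<pi> j) A)"
      using rect[OF j A B] lawm[OF j A] lawm[OF j, of "A \<inter> Y j -` B"] A
        measurable_sets_borel[OF Y_facts(1)[OF j] B] by auto
    also have "measure (\<pi> j) (A \<inter> Y j -` B) = Pa X" by (simp add: Pa_def X vimage_def Int_def)
    also have "measure (\<pi> (Suc j)) B * measure (\<pi> j) A = Pb X"
    proof -
      have "emeasure (\<pi> j \<Otimes>\<^sub>M \<pi> (Suc j)) (A \<times> B) = emeasure (\<pi> j) A * emeasure (\<pi> (Suc j)) B"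
        by (rule rj1.emeasure_pair_measure_Times) (use A B in auto)
      then show ?thesis unfolding Pb_def X measure_def by (simp add: enn2real_mult mult.commute)
    qed
    finally show ?case by (simp add: mult.assoc)
  next
    case empty
    then show ?case by (simp add: L_def Pa_def Pb_def)
  next
    case (compl X)
    have eL: "L (UNIV - X) = 1 - L X"
    proof -
      have "{\<omega> \<in> space M. (v j \<omega>, v (Suc j) \<omega>) \<in> UNIV - X} = space M - {\<omega> \<in> space M. (v j \<omega>, v (Suc j) \<omega>) \<in> X}"
        by auto
      then show ?thesis using prob_compl[OF mL[OF compl(1)]] by (simp add: L_def)
    qed
    have ePa: "Pa (UNIV - X) = 1 - Pa X"
    proof -
      have "{x. (x, Y j x) \<in> UNIV - X} = space (\<pi> j) - {x. (x, Y j x) \<in> X}" by auto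
      then show ?thesis using rj.prob_compl[OF mPa[OF compl(1)]] by (simp add: Pa_def)
    qed
    have ePb: "Pb (UNIV - X) = 1 - Pb X"
    proof -
      have "UNIV - X = space (\<pi> j \<Otimes>\<^sub>M \<pi> (Suc j)) - X" by (simp add: space_pair_measure)
      then show ?thesis using pp.prob_compl[OF mPb[OF compl(1)]] by (simp add: Pb_def)
    qed
    show ?case unfolding eL ePa ePb compl(2) by algebra
  next
    case (union A)
    have sL: "(\<lambda>i. L (A i)) sums L (\<Union>i. A i)"
    proof -
      have "(\<lambda>i. measure M {\<omega> \<in> space M. (v j \<omega>, v (Suc j) \<omega>) \<in> A i}) sums
            measure M (\<Union>i. {\<omega> \<in> space M. (v j \<omega>, v (Suc j) \<omega>) \<in> A i})"
        using union(1,2) mL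
        by (intro finite_measure_UNION) (auto simp: disjoint_family_on_def)
      moreover have "(\<Union>i. {\<omega> \<in> space M. (v j \<omega>, v (Suc j) \<omega>) \<in> A i}) =
          {\<omega> \<in> space M. (v j \<omega>, v (Suc j) \<omega>) \<in> (\<Union>i. A i)}" by auto
      ultimately show ?thesis by (simp add: L_def)
    qed
    have sPa: "(\<lambda>i. Pa (A i)) sums Pa (\<Union>i. A i)"
    proof -
      have "(\<lambda>i. measure (\<pi> j) {x. (x, Y j x) \<in> A i}) sums measure (\<pi> j) (\<Union>i. {x. (x, Y j x) \<in> A i})"
        using union(1,2) mPa
        by (intro rj.finite_measure_UNION) (auto simp: disjoint_family_on_def)
      moreover have "(\<Union>i. {x. (x, Y j x) \<in> A i}) = {x. (x, Y j x) \<in> (\<Union>i. A i)}" by auto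
      ultimately show ?thesis by (simp add: Pa_def)
    qed
    have sPb: "(\<lambda>i. Pb (A i)) sums Pb (\<Union>i. A i)"
      unfolding Pb_def using union(1,2) mPb by (intro pp.finite_measure_UNION) auto
    have "(\<lambda>i. \<rho> * Pa (A i) + (1 - \<rho>) * Pb (A i)) sums (\<rho> * Pa (\<Union>i. A i) + (1 - \<rho>) * Pb (\<Union>i. A i))"
      by (intro sums_add sums_mult sPa sPb)
    then have "(\<lambda>i. L (A i)) sums (\<rho> * Pa (\<Union>i. A i) + (1 - \<rho>) * Pb (\<Union>i. A i))"
      using union(3) by simp
    then show ?case using sL sums_unique2 by blast
  qed
  then show ?thesis by (simp add: L_def Pa_def Pb_def)
qed

end

context chain_setup
begin

lemma sbw_meas: "k \<ge> 1 \<Longrightarrow> sb_weight v k \<in> borel_measurable M"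
  unfolding sb_weight_def[abs_def]
  by (intro borel_measurable_times borel_measurable_prod borel_measurable_diff vmeas) auto

lemma AE_unit: "k \<ge> 1 \<Longrightarrow> AE \<omega> in M. v k \<omega> \<in> {0<..<1}"
proof -
  assume k: "k \<ge> 1"
  interpret rk: real_distribution "\<pi> k" by (rule rd[OF k])
  have h: "AE x in \<pi> k. x \<in> {0<..<1}"
    by (rule rk.AE_prob_1) (rule measure_beta_inside[OF a_pos b_pos[OF k]])
  have "AE x in distr M borel (v k). x \<in> {0<..<1}" unfolding law[OF k] by (rule h)
  then show ?thesis by (subst (asm) AE_distr_iff) (auto intro: vmeas[OF k])
qed

definition cfun :: "real \<Rightarrow> real" where "cfun x = min 1 (x / (1 - x))"

lemma cfun_meas[measurable]: "cfun \<in> borel_measurable borel"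
  unfolding cfun_def by measurable

lemma main:
  assumes j: "j \<ge> 1"
  shows "measure M {\<omega> \<in> space M. sb_weight v (Suc j) \<omega> \<le> sb_weight v j \<omega>} =
           \<rho> + (1 - \<rho>) *
             (\<integral>x. incbeta (1 - \<sigma>) (\<theta> + real (Suc j) * \<sigma>) (min 1 (x / (1 - x))) \<partial>\<pi> j)"
proof -
  interpret prob_space M by (rule ps)
  have j1: "Suc j \<ge> 1" by simp
  interpret rj: real_distribution "\<pi> j" by (rule rd[OF j])
  interpret rj1: real_distribution "\<pi> (Suc j)" by (rule rd[OF j1])
  note [measurable] = vmeas[OF j] vmeas[OF j1] sbw_meas[OF j] sbw_meas[OF j1] Y_facts(1)[OF j]
  define C where "C = {p :: real \<times> real. snd p \<le> cfun (fst p)}"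
  have C: "C \<in> sets (borel \<Otimes>\<^sub>M (borel :: real measure))"
  proof -
    have "{p \<in> space (borel \<Otimes>\<^sub>M (borel :: real measure)). snd p \<le> cfun (fst p)} \<in> sets (borel \<Otimes>\<^sub>M borel)"
      by measurable
    then show ?thesis by (simp add: C_def space_pair_measure)
  qed
  have AEall: "AE \<omega> in M. \<forall>i\<in>{1..Suc j}. v i \<omega> \<in> {0<..<1}"
    apply (rule eventually_ball_finite)
     apply simp
    apply (intro ballI)
    apply (rule AE_unit)
    by simp
  have "measure M {\<omega> \<in> space M. sb_weight v (Suc j) \<omega> \<le> sb_weight v j \<omega>} =
        measure M {\<omega> \<in> space M. (v j \<omega>, v (Suc j) \<omega>) \<in> C}"
  proof (rule measure_eq_AE)
    show "AE \<omega> in M. (\<omega> \<in> {\<omega> \<in> space M. sb_weight v (Suc j) \<omega> \<le> sb_weight v j \<omega>}) =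
                      (\<omega> \<in> {\<omega> \<in> space M. (v j \<omega>, v (Suc j) \<omega>) \<in> C})"
      using AEall
    proof eventually_elim
      case (elim \<omega>)
      have vj: "0 < v j \<omega>" "v j \<omega> < 1" using elim j by auto
      have vj1: "0 < v (Suc j) \<omega>" "v (Suc j) \<omega> < 1" using elim by auto
      define P where "P = (\<Prod>i\<in>{1..<j}. (1 - v i \<omega>))"
      have P: "P > 0" unfolding P_def using elim by (intro prod_pos) auto
      have s1: "sb_weight v (Suc j) \<omega> = v (Suc j) \<omega> * (1 - v j \<omega>) * P"
        unfolding sb_weight_def P_def using j by (simp add: prod.atLeastLessThan_Suc)
      have s2: "sb_weight v j \<omega> = v j \<omega> * P" unfolding sb_weight_def P_def by simp
      have "sb_weight v (Suc j) \<omega> \<le> sb_weight v j \<omega> \<longleftrightarrow> v (Suc j) \<omega> * (1 - v j \<omega>) \<le> v j \<omega>"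
        unfolding s1 s2 using P by simp
      also have "\<dots> \<longleftrightarrow> v (Suc j) \<omega> \<le> v j \<omega> / (1 - v j \<omega>)"
        using vj by (simp add: pos_le_divide_eq)
      also have "\<dots> \<longleftrightarrow> v (Suc j) \<omega> \<le> cfun (v j \<omega>)"
        using vj1 by (auto simp: cfun_def)
      finally show ?case by (simp add: C_def)
    qed
  next
    show "{\<omega> \<in> space M. sb_weight v (Suc j) \<omega> \<le> sb_weight v j \<omega>} \<in> sets M" by measurable
    show "{\<omega> \<in> space M. (v j \<omega>, v (Suc j) \<omega>) \<in> C} \<in> sets M"
      using C by measurable
  qed
  also have "\<dots> = \<rho> * measure (\<pi> j) {x. (x, Y j x) \<in> C} + (1 - \<rho>) * measure (\<pi> j \<Otimes>\<^sub>M \<pi> (Suc j)) C"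
    by (rule joint[OF j C])
  also have "measure (\<pi> j) {x. (x, Y j x) \<in> C} = 1"
  proof -
    have sub: "{0<..<1} \<subseteq> {x. (x, Y j x) \<in> C}"
    proof
      fix x :: real assume x: "x \<in> {0<..<1}"
      have "Y j x \<le> x" using Y_le[OF j, of x] x by auto
      also have "x \<le> cfun x"
      proof -
        have "x * (1 - x) \<le> x" using x by (simp add: mult_left_le_one_le algebra_simps)
        then have "x \<le> x / (1 - x)" using x by (simp add: pos_le_divide_eq)
        then show ?thesis using x by (simp add: cfun_def)
      qed
      finally show "x \<in> {x. (x, Y j x) \<in> C}" by (simp add: C_def)
    qed
    have ms: "{x. (x, Y j x) \<in> C} \<in> sets (\<pi> j)"
    proof -
      have "(\<lambda>x. (x, Y j x)) \<in> measurable borel (borel \<Otimes>\<^sub>M borel)" by measurable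
      from measurable_sets[OF this C] show ?thesis by (simp add: vimage_def)
    qed
    have "1 \<le> measure (\<pi> j) {x. (x, Y j x) \<in> C}"
      using rj.finite_measure_mono[OF sub ms] measure_beta_inside[OF a_pos b_pos[OF j]] by simp
    then show ?thesis using rj.prob_le_1 by (intro antisym) auto
  qed
  also have "measure (\<pi> j \<Otimes>\<^sub>M \<pi> (Suc j)) C =
      (\<integral>x. incbeta (1 - \<sigma>) (\<theta> + real (Suc j) * \<sigma>) (min 1 (x / (1 - x))) \<partial>\<pi> j)"
  proof -
    let ?f = "\<lambda>x. incbeta (1 - \<sigma>) (\<theta> + real (Suc j) * \<sigma>) (min 1 (x / (1 - x)))"
    have Cs: "C \<in> sets (\<pi> j \<Otimes>\<^sub>M \<pi> (Suc j))" using C by simp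
    have inc: "incbeta (1 - \<sigma>) (\<theta> + real (Suc j) * \<sigma>) = cdf_of (\<pi> (Suc j))"
      by (simp add: incbeta_def cdf_of_def fun_eq_iff)
    have incm: "incbeta (1 - \<sigma>) (\<theta> + real (Suc j) * \<sigma>) \<in> borel_measurable borel"
      unfolding inc
      by (rule borel_measurable_mono, rule monoI, rule cdf_beta_mono[OF a_pos b_pos[OF j1]])
    have fm: "?f \<in> borel_measurable (\<pi> j)"
      using measurable_compose[OF cfun_meas incm] by (simp add: cfun_def comp_def)
    have f01: "0 \<le> ?f x" "?f x \<le> 1" for x
      unfolding inc by (rule cdf_beta_bounds[OF a_pos b_pos[OF j1]])+
    have intf: "integrable (\<pi> j) ?f"
      by (rule rj.integrable_const_bound[where B=1]) (use f01 fm in auto)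
    have "emeasure (\<pi> j \<Otimes>\<^sub>M \<pi> (Suc j)) C = (\<integral>\<^sup>+x. emeasure (\<pi> (Suc j)) (Pair x -` C) \<partial>\<pi> j)"
      by (rule rj1.emeasure_pair_measure_alt[OF Cs])
    also have "\<dots> = (\<integral>\<^sup>+x. ennreal (?f x) \<partial>\<pi> j)"
    proof (rule nn_integral_cong)
      fix x
      have "Pair x -` C = {..cfun x}" by (auto simp: C_def)
      then show "emeasure (\<pi> (Suc j)) (Pair x -` C) = ennreal (?f x)"
        using rj1.emeasure_eq_measure[of "{..cfun x}"] by (simp add: incbeta_def cfun_def)
    qed
    also have "\<dots> = ennreal (\<integral>x. ?f x \<partial>\<pi> j)"
      by (rule nn_integral_eq_integral[OF intf]) (use f01 in auto)
    finally show ?thesis unfolding measure_def using f01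
      by (simp add: integral_nonneg)
  qed
  finally show ?thesis by simp
qed

end

theorem mainTheorem19:
  fixes M :: "'a measure" and v :: "nat \<Rightarrow> 'a \<Rightarrow> real"
    and \<rho> \<sigma> \<theta> :: real and j :: nat
  assumes "0 \<le> \<rho>" "\<rho> \<le> 1"
    and "0 \<le> \<sigma>" "\<sigma> < 1" "\<theta> > - \<sigma>"
    and "lazy_markov_chain M \<rho> (\<lambda>k. beta_measure (1 - \<sigma>) (\<theta> + real k * \<sigma>)) v"
    and "j \<ge> 1"
  shows "measure M {\<omega> \<in> space M. sb_weight v (Suc j) \<omega> \<le> sb_weight v j \<omega>} =
           \<rho> + (1 - \<rho>) *
             (\<integral>x. incbeta (1 - \<sigma>) (\<theta> + real (Suc j) * \<sigma>) (min 1 (x / (1 - x)))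
                \<partial>beta_measure (1 - \<sigma>) (\<theta> + real j * \<sigma>))"
proof -
  interpret chain_setup M v \<rho> \<sigma> \<theta>
    using assms by unfold_locales auto
  show ?thesis by (rule main[OF assms(7)])
qed

end
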